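(* Let $a<b$, $1<p<\infty$, $q=p/(p-1)$, $\Delta=\{(t,\tau):a\le\tau<t\le b\}$, $k\in L^q(\Delta;\mathbb{R})$, $\lambda,\mu\in\mathbb{R}$, and let $K_P,B_P$ be as in the context. Let $F:\mathbb{R}^4\times[a,b]\to\mathbb{R}$ be of class $C^1$, $y_a\in\mathbb{R}$, $W^{1,p}_a(a,b;\mathbb{R})=\{y\in W^{1,p}(a,b;\mathbb{R}):y(a)=y_a\}$, and $\mathcal{I}(y)=\int_a^bF(y(t),K_P[y](t),\dot y(t),B_P[y](t),t)\,dt$. Assume that for all $(x_1,x_2,x_3,x_4,t)\in\mathbb{R}^4\times[a,b]$, $$F(x_1,x_2,x_3,x_4,t)\ge c_0|x_3|^p+\sum_{k=1}^Nc_k|x_1|^{d_{1,k}}|x_2|^{d_{2,k}}|x_3|^{d_{3,k}}|x_4|^{d_{4,k}},$$ where $c_0>0$, $N\in\mathbb{N}$, and for each $k=1,\dots,N$, $c_k\in\mathbb{R}$ and $(d_{1,k},d_{2,k},d_{3,k},d_{4,k})\in[0,\infty)\times[0,q]\times[0,p]\times[0,q]$ satisfies $d_{2,k}+(q/p)d_{3,k}+d_{4,k}\le q$ and $0\le d_{1,k}+d_{2,k}+d_{3,k}+d_{4,k}<p$. Then $\mathcal{I}$ is coercive on $W^{1,p}_a(a,b;\mathbb{R})$.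
   Context: $K_P[f](t)=\lambda\int_a^t k(t,\tau)f(\tau)d\tau+\mu\int_t^bk(\tau,t)f(\tau)d\tau$ and $B_P=K_P\circ\frac{d}{dt}$. $\mathcal{I}$ is coercive on a set $\mathcal{A}$ if $\mathcal{I}(y)\to+\infty$ as $\|y\|_{W^{1,p}}\to\infty$ with $y\in\mathcal{A}$. *)

theory Defs
  imports "HOL-Analysis.Analysis"
begin

definition Lp_on :: "real \<Rightarrow> real \<Rightarrow> real \<Rightarrow> (real \<Rightarrow> real) \<Rightarrow> bool" where
  "Lp_on p a b g \<longleftrightarrow> set_borel_measurable lborel {a..b} g
      \<and> set_integrable lborel {a..b} (\<lambda>t. \<bar>g t\<bar> powr p)"

definition Lp_norm :: "real \<Rightarrow> real \<Rightarrow> real \<Rightarrow> (real \<Rightarrow> real) \<Rightarrow> real" where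
  "Lp_norm p a b g = (LINT t:{a..b}|lborel. \<bar>g t\<bar> powr p) powr (1 / p)"

text \<open>g is a (weak) derivative of y in L^p: y is the indefinite integral of g on [a,b]
  (the absolutely continuous representative).\<close>
definition is_wderiv :: "real \<Rightarrow> real \<Rightarrow> real \<Rightarrow> (real \<Rightarrow> real) \<Rightarrow> (real \<Rightarrow> real) \<Rightarrow> bool" where
  "is_wderiv p a b y g \<longleftrightarrow> Lp_on p a b g
      \<and> (\<forall>t\<in>{a..b}. y t = y a + (LINT s:{a..t}|lborel. g s))"

definition W1p :: "real \<Rightarrow> real \<Rightarrow> real \<Rightarrow> (real \<Rightarrow> real) set" where
  "W1p p a b = {y. \<exists>g. is_wderiv p a b y g}"

definition wderiv :: "real \<Rightarrow> real \<Rightarrow> real \<Rightarrow> (real \<Rightarrow> real) \<Rightarrow> (real \<Rightarrow> real)" where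
  "wderiv p a b y = (SOME g. is_wderiv p a b y g)"

definition W1p_norm :: "real \<Rightarrow> real \<Rightarrow> real \<Rightarrow> (real \<Rightarrow> real) \<Rightarrow> real" where
  "W1p_norm p a b y = Lp_norm p a b y + Lp_norm p a b (wderiv p a b y)"

definition KP :: "real \<Rightarrow> real \<Rightarrow> (real \<times> real \<Rightarrow> real) \<Rightarrow> real \<Rightarrow> real \<Rightarrow> (real \<Rightarrow> real) \<Rightarrow> real \<Rightarrow> real" where
  "KP lam mu k a b f t = lam * (LINT \<tau>:{a..t}|lborel. k (t, \<tau>) * f \<tau>)
                        + mu * (LINT \<tau>:{t..b}|lborel. k (\<tau>, t) * f \<tau>)"

definition BP :: "real \<Rightarrow> real \<Rightarrow> (real \<times> real \<Rightarrow> real) \<Rightarrow> real \<Rightarrow> real \<Rightarrow> real \<Rightarrow> (real \<Rightarrow> real) \<Rightarrow> real \<Rightarrow> real" where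
  "BP lam mu k a b p y = KP lam mu k a b (wderiv p a b y)"

definition ext_integral :: "real \<Rightarrow> real \<Rightarrow> (real \<Rightarrow> real) \<Rightarrow> ereal" where
  "ext_integral a b f = enn2ereal (\<integral>\<^sup>+ t\<in>{a..b}. ennreal (f t) \<partial>lborel)
                      - enn2ereal (\<integral>\<^sup>+ t\<in>{a..b}. ennreal (- f t) \<partial>lborel)"

definition Ifun :: "(real \<Rightarrow> real \<Rightarrow> real \<Rightarrow> real \<Rightarrow> real \<Rightarrow> real) \<Rightarrow> real \<Rightarrow> real \<Rightarrow> (real \<times> real \<Rightarrow> real)
    \<Rightarrow> real \<Rightarrow> real \<Rightarrow> real \<Rightarrow> (real \<Rightarrow> real) \<Rightarrow> ereal" where
  "Ifun F lam mu k a b p y = ext_integral a b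
     (\<lambda>t. F (y t) (KP lam mu k a b y t) (wderiv p a b y t) (BP lam mu k a b p y t) t)"

definition C1_on :: "'a::euclidean_space set \<Rightarrow> ('a \<Rightarrow> real) \<Rightarrow> bool" where
  "C1_on S f \<longleftrightarrow> (\<exists>f'::'a \<Rightarrow> 'a \<Rightarrow>\<^sub>L real.
      (\<forall>x\<in>S. (f has_derivative blinfun_apply (f' x)) (at x within S)) \<and> continuous_on S f')"

text \<open>|x|^d with the convention 0^0 = 1.\<close>
definition pw :: "real \<Rightarrow> real \<Rightarrow> real" where
  "pw x d = (if d = 0 then 1 else \<bar>x\<bar> powr d)"

definition coercive_on :: "'a set \<Rightarrow> ('a \<Rightarrow> real) \<Rightarrow> ('a \<Rightarrow> ereal) \<Rightarrow> bool" where
  "coercive_on A nrm I \<longleftrightarrow> (\<forall>M::real. \<exists>R::real. \<forall>y\<in>A. nrm y > R \<longrightarrow> I y > ereal M)"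

end

theory Submission
  imports Defs
begin

lemma young_pq:
  fixes p q u v :: real
  assumes "1 < p" "q = p / (p - 1)" "0 \<le> u" "0 \<le> v"
  shows "u * v \<le> u powr p / p + v powr q / q"
proof -
  have q1: "q > 1" using assms by (simp add: less_divide_eq)
  have "1/p + 1/q = 1" using assms q1 by (simp add: field_simps divide_simps)
  thus ?thesis using Youngs_inequality[OF assms(1) q1 _ assms(3,4)] by simp
qed

lemma max_powr_le:
  fixes m a :: real assumes "1 \<le> m" "0 \<le> a" "a \<le> 1" shows "m powr a \<le> m"
  using powr_mono[of a 1 m] assms by simp

lemma amgm_crude:
  fixes u v a b :: real
  assumes "1 \<le> u" "0 \<le> v" "0 \<le> a" "0 \<le> b" "a + b \<le> 1"
  shows "u powr a * (if b = 0 then 1 else v powr b) \<le> u + v + 1"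
proof -
  define m where "m = max u (max v 1)"
  have m1: "1 \<le> m" and um: "u \<le> m" and vm: "v \<le> m" using assms by (auto simp: m_def)
  have "m \<le> u + v + 1" using assms by (auto simp: m_def)
  have h1: "u powr a \<le> m powr a" using assms um by (intro powr_mono2) auto
  have h2: "(if b = 0 then 1 else v powr b) \<le> m powr b"
    using assms vm m1 by (auto intro: powr_mono2)
  have "u powr a * (if b = 0 then 1 else v powr b) \<le> m powr a * m powr b"
    using h1 h2 assms by (intro mult_mono) auto
  also have "\<dots> = m powr (a + b)" using m1 by (simp add: powr_add)
  also have "\<dots> \<le> m" using max_powr_le[OF m1] assms by simp
  finally show ?thesis using \<open>m \<le> u + v + 1\<close> by simp
qed

lemma pw_mono:
  fixes x X d :: real assumes "\<bar>x\<bar> \<le> X" "0 < X" "0 \<le> d"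
  shows "pw x d \<le> X powr d" "0 \<le> pw x d"
  using assms by (auto simp: pw_def intro: powr_mono2)

lemma pw_g_bound:
  fixes u x R a d p :: real
  assumes "1 \<le> u" "0 < R" "0 \<le> a" "0 \<le> d" "0 < p" "a + d / p \<le> 1"
  shows "u powr a * pw x d \<le> R powr d * (u + \<bar>x\<bar> powr p / R powr p + 1)"
proof (cases "d = 0")
  case True
  have "0 \<le> \<bar>x\<bar> powr p / R powr p" by simp
  moreover have "u powr a \<le> u + 1" using amgm_crude[of u 0 a 0] assms True by simp
  ultimately have "u powr a \<le> u + \<bar>x\<bar> powr p / R powr p + 1" by linarith
  thus ?thesis using True assms(2) by (simp add: pw_def)
next
  case False
  define v where "v = \<bar>x\<bar> powr p / R powr p"
  have v0: "0 \<le> v" by (simp add: v_def)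
  have dp: "0 \<le> d / p" "d / p \<noteq> 0" using assms False by auto
  have eq: "pw x d = R powr d * v powr (d / p)"
  proof -
    have "v = (\<bar>x\<bar> / R) powr p" using assms by (simp add: v_def powr_divide)
    hence "v powr (d/p) = (\<bar>x\<bar> / R) powr d" using assms by (simp add: powr_powr)
    also have "\<dots> = \<bar>x\<bar> powr d / R powr d" using assms by (simp add: powr_divide)
    finally show ?thesis using False assms by (simp add: pw_def)
  qed
  have "u powr a * (if d/p = 0 then 1 else v powr (d/p)) \<le> u + v + 1"
    using amgm_crude[OF assms(1) v0 assms(3) dp(1)] assms by simp
  hence "u powr a * v powr (d/p) \<le> u + v + 1" using dp by simp
  hence "R powr d * (u powr a * v powr (d/p)) \<le> R powr d * (u + v + 1)"
    by (intro mult_left_mono) auto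
  thus ?thesis by (simp add: eq v_def mult.assoc mult.left_commute)
qed

lemma growth:
  fixes c0 p s A M :: real
  assumes "0 < c0" "0 \<le> s" "s < p" "0 \<le> A"
  shows "\<exists>R0\<ge>1. \<forall>R\<ge>R0. c0 * (R powr p - 1) - A * R powr s > M"
proof -
  define K where "K = A / c0 + (\<bar>M\<bar> + c0) / c0 + 1"
  have K1: "K \<ge> 1" using assms by (simp add: K_def)
  define R0 where "R0 = max 1 (K powr (1 / (p - s)))"
  show ?thesis
  proof (intro exI[of _ R0] conjI allI impI)
    show "1 \<le> R0" by (simp add: R0_def)
    fix R assume R: "R0 \<le> R"
    have R1: "1 \<le> R" using R by (simp add: R0_def)
    have "K = (K powr (1 / (p - s))) powr (p - s)" using assms K1 by (simp add: powr_powr)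
    also have "\<dots> \<le> R powr (p - s)" using R assms K1
      by (intro powr_mono2) (auto simp: R0_def)
    finally have KR: "K \<le> R powr (p - s)" .
    have Rs: "1 \<le> R powr s" using R1 assms by (simp add: ge_one_powr_ge_zero)
    have "R powr p = R powr s * R powr (p - s)" using R1 by (simp flip: powr_add)
    hence "c0 * R powr p \<ge> c0 * (R powr s * K)" using KR Rs assms
      by (simp add: mult_left_mono)
    also have "c0 * (R powr s * K) = R powr s * (A + \<bar>M\<bar> + c0 + c0)"
      using assms by (simp add: K_def field_simps)
    finally have "c0 * R powr p \<ge> R powr s * (A + \<bar>M\<bar> + c0 + c0)" .
    moreover have "R powr s * (\<bar>M\<bar> + c0 + c0) \<ge> \<bar>M\<bar> + c0 + c0"
      using Rs assms mult_right_mono[OF Rs, of "\<bar>M\<bar> + c0 + c0"] by simp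
    ultimately show "c0 * (R powr p - 1) - A * R powr s > M"
      using assms(1) by (simp add: algebra_simps)
  qed
qed

lemma abs_integral_le_nn:
  fixes h :: "'a \<Rightarrow> real"
  shows "ennreal \<bar>integral\<^sup>L M h\<bar> \<le> (\<integral>\<^sup>+x. ennreal \<bar>h x\<bar> \<partial>M)"
proof (cases "integrable M h")
  case True
  then show ?thesis using integral_norm_bound_ennreal[OF True] by simp
next
  case False
  then show ?thesis by (simp add: not_integrable_integral_eq)
qed

lemma young_integral:
  fixes h u v U V :: "real \<Rightarrow> real" and p q \<kappa> \<rho> :: real
  assumes pq: "1 < p" "q = p / (p - 1)" and kr: "0 < \<kappa>" "0 < \<rho>"
    and uv: "\<And>x. 0 \<le> u x" "\<And>x. 0 \<le> v x"
    and hb: "AE x in lborel. \<bar>h x\<bar> \<le> u x * v x"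
    and Um: "U \<in> borel_measurable lborel" and Vm: "V \<in> borel_measurable lborel"
    and Ub: "\<And>x. u x powr q \<le> U x" and Vb: "\<And>x. v x powr p \<le> V x"
    and UI: "(\<integral>\<^sup>+x. ennreal (U x) \<partial>lborel) \<le> ennreal (\<kappa> powr q)"
    and VI: "(\<integral>\<^sup>+x. ennreal (V x) \<partial>lborel) \<le> ennreal (\<rho> powr p)"
  shows "\<bar>integral\<^sup>L lborel h\<bar> \<le> \<kappa> * \<rho>"
proof -
  have q1: "q > 1" using pq by (simp add: less_divide_eq)
  have pq1: "1/p + 1/q = 1" using pq q1 by (simp add: field_simps divide_simps)
  define c1 where "c1 = \<kappa> * \<rho> / (q * \<kappa> powr q)"
  define c2 where "c2 = \<kappa> * \<rho> / (p * \<rho> powr p)"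
  have c0: "0 \<le> c1" "0 \<le> c2" using kr q1 pq by (auto simp: c1_def c2_def)
  have U0: "0 \<le> U x" for x by (rule order_trans[OF _ Ub]) simp
  have V0: "0 \<le> V x" for x by (rule order_trans[OF _ Vb]) simp
  have pt: "u x * v x \<le> c1 * U x + c2 * V x" for x
  proof -
    have "u x * v x = \<kappa> * \<rho> * ((u x / \<kappa>) * (v x / \<rho>))" using kr by simp
    also have "\<dots> \<le> \<kappa> * \<rho> * ((v x / \<rho>) powr p / p + (u x / \<kappa>) powr q / q)"
      using young_pq[OF pq, of "v x / \<rho>" "u x / \<kappa>"] kr uv
      by (intro mult_left_mono) (auto simp: mult.commute)
    also have "\<dots> = \<kappa> * \<rho> * (v x powr p / (p * \<rho> powr p) + u x powr q / (q * \<kappa> powr q))"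
      using kr uv by (simp add: powr_divide mult.commute)
    also have "\<dots> \<le> \<kappa> * \<rho> * (V x / (p * \<rho> powr p) + U x / (q * \<kappa> powr q))"
      using kr uv Ub[of x] Vb[of x] pq q1
      by (intro mult_left_mono add_mono divide_right_mono) auto
    also have "\<dots> = c1 * U x + c2 * V x" by (simp add: c1_def c2_def field_simps)
    finally show ?thesis .
  qed
  have "ennreal \<bar>integral\<^sup>L lborel h\<bar> \<le> (\<integral>\<^sup>+x. ennreal \<bar>h x\<bar> \<partial>lborel)"
    by (rule abs_integral_le_nn)
  also have "\<dots> \<le> (\<integral>\<^sup>+x. ennreal c1 * ennreal (U x) + ennreal c2 * ennreal (V x) \<partial>lborel)"
  proof (rule nn_integral_mono_AE)
    show "AE x in lborel. ennreal \<bar>h x\<bar> \<le> ennreal c1 * ennreal (U x) + ennreal c2 * ennreal (V x)"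
      using hb
    proof eventually_elim
      case (elim x)
      have "\<bar>h x\<bar> \<le> c1 * U x + c2 * V x" using elim pt[of x] by linarith
      thus ?case using c0 U0[of x] V0[of x]
        by (simp add: ennreal_mult'[symmetric] ennreal_plus[symmetric] del: ennreal_plus)
    qed
  qed
  also have "\<dots> = ennreal c1 * (\<integral>\<^sup>+x. ennreal (U x) \<partial>lborel) + ennreal c2 * (\<integral>\<^sup>+x. ennreal (V x) \<partial>lborel)"
    using Um Vm by (simp add: nn_integral_add nn_integral_cmult)
  also have "\<dots> \<le> ennreal c1 * ennreal (\<kappa> powr q) + ennreal c2 * ennreal (\<rho> powr p)"
    by (intro add_mono mult_left_mono UI VI) auto
  also have "\<dots> = ennreal (c1 * \<kappa> powr q + c2 * \<rho> powr p)"
    using c0 by (simp add: ennreal_mult'[symmetric] ennreal_plus[symmetric] del: ennreal_plus)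
  also have "c1 * \<kappa> powr q + c2 * \<rho> powr p = \<kappa> * \<rho> * (1/q + 1/p)"
    using kr q1 pq by (simp add: c1_def c2_def field_simps)
  also have "\<dots> = \<kappa> * \<rho>" using pq1 by simp
  finally show ?thesis using kr by (simp add: ennreal_le_iff)
qed

lemma section_meas1:
  fixes G :: "real \<times> real \<Rightarrow> real"
  assumes "G \<in> borel_measurable lborel"
  shows "(\<lambda>\<tau>. G (t, \<tau>)) \<in> borel_measurable lborel" "(\<lambda>\<tau>. G (\<tau>, t)) \<in> borel_measurable lborel"
  using assms by (simp_all add: lborel_prod[symmetric])

lemma powr_ind_le:
  fixes x :: real assumes "0 \<le> x" "0 < r"
  shows "(indicator S s * x) powr r = indicator S s * x powr r"
  using assms by (auto simp: indicator_def)

lemma KP_bound: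
  fixes a b p q lam mu t W P :: real and k :: "real \<times> real \<Rightarrow> real" and f V :: "real \<Rightarrow> real"
  defines "D \<equiv> {(t, \<tau>). a \<le> \<tau> \<and> \<tau> < t \<and> t \<le> b}"
  assumes pq: "1 < p" "q = p / (p - 1)" and t: "a \<le> t" "t \<le> b"
    and kqm: "(\<lambda>z. indicator D z * \<bar>k z\<bar> powr q) \<in> borel_measurable lborel"
    and K: "(\<integral>\<^sup>+\<tau>. ennreal (indicator D (t,\<tau>) * \<bar>k (t,\<tau>)\<bar> powr q) \<partial>lborel)
            + (\<integral>\<^sup>+\<tau>. ennreal (indicator D (\<tau>,t) * \<bar>k (\<tau>,t)\<bar> powr q) \<partial>lborel) \<le> ennreal W"
    and W0: "0 \<le> W"
    and Vm: "V \<in> borel_measurable lborel"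
    and Vb: "\<And>\<tau>. indicator {a..b} \<tau> * \<bar>f \<tau>\<bar> powr p \<le> V \<tau>"
    and VI: "(\<integral>\<^sup>+\<tau>. ennreal (V \<tau>) \<partial>lborel) \<le> ennreal P" and P0: "0 \<le> P"
  shows "\<bar>KP lam mu k a b f t\<bar> \<le> (\<bar>lam\<bar> + \<bar>mu\<bar>) * ((W+1) powr (1/q) * (P+1) powr (1/p))"
proof -
  have q1: "q > 1" using pq by (simp add: less_divide_eq)
  define \<kappa> where "\<kappa> = (W+1) powr (1/q)"
  define \<rho> where "\<rho> = (P+1) powr (1/p)"
  have kr: "0 < \<kappa>" "0 < \<rho>" using W0 P0 by (auto simp: \<kappa>_def \<rho>_def)
  have kq: "\<kappa> powr q = W + 1" using W0 q1 by (simp add: \<kappa>_def powr_powr)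
  have rp: "\<rho> powr p = P + 1" using P0 pq by (simp add: \<rho>_def powr_powr)
  have VI': "(\<integral>\<^sup>+x. ennreal (V x) \<partial>lborel) \<le> ennreal (\<rho> powr p)"
    using VI rp by (simp add: order_trans[OF _ ennreal_leI])
  have Vb': "(indicator {a..b} x * \<bar>f x\<bar>) powr p \<le> V x" for x
    using Vb[of x] pq by (subst powr_ind_le) auto
  define U1 where "U1 = (\<lambda>\<tau>. indicator D (t,\<tau>) * \<bar>k (t,\<tau>)\<bar> powr q)"
  define U2 where "U2 = (\<lambda>\<tau>. indicator D (\<tau>,t) * \<bar>k (\<tau>,t)\<bar> powr q)"
  have U1m: "U1 \<in> borel_measurable lborel" and U2m: "U2 \<in> borel_measurable lborel"
    using section_meas1[OF kqm] by (simp_all add: U1_def U2_def)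
  have Wk: "ennreal W \<le> ennreal (\<kappa> powr q)" using kq by (simp add: ennreal_leI)
  have UI1: "(\<integral>\<^sup>+x. ennreal (U1 x) \<partial>lborel) \<le> ennreal (\<kappa> powr q)"
    unfolding U1_def by (rule order_trans[OF order_trans[OF add_increasing2[OF zero_le order_refl] K] Wk])
  have UI2: "(\<integral>\<^sup>+x. ennreal (U2 x) \<partial>lborel) \<le> ennreal (\<kappa> powr q)"
    unfolding U2_def by (rule order_trans[OF order_trans[OF add_increasing[OF zero_le order_refl] K] Wk])
  have T1: "\<bar>LINT \<tau>:{a..t}|lborel. k (t, \<tau>) * f \<tau>\<bar> \<le> \<kappa> * \<rho>"
    unfolding set_lebesgue_integral_def
  proof (rule young_integral[OF pq kr, where u = "\<lambda>\<tau>. indicator D (t,\<tau>) * \<bar>k (t,\<tau>)\<bar>"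
        and v = "\<lambda>\<tau>. indicator {a..b} \<tau> * \<bar>f \<tau>\<bar>" and U = U1 and V = V])
    show "AE x in lborel. \<bar>indicator {a..t} x *\<^sub>R (k (t, x) * f x)\<bar>
          \<le> indicator D (t, x) * \<bar>k (t, x)\<bar> * (indicator {a..b} x * \<bar>f x\<bar>)"
      using AE_lborel_singleton[of t]
    proof eventually_elim
      case (elim x)
      then show ?case using t by (auto simp: indicator_def D_def abs_mult)
    qed
    show "(indicator D (t, x) * \<bar>k (t, x)\<bar>) powr q \<le> U1 x" for x
      using q1 by (subst powr_ind_le) (auto simp: U1_def)
  qed (use U1m Vm Vb' UI1 VI' in auto)
  have T2: "\<bar>LINT \<tau>:{t..b}|lborel. k (\<tau>, t) * f \<tau>\<bar> \<le> \<kappa> * \<rho>"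
    unfolding set_lebesgue_integral_def
  proof (rule young_integral[OF pq kr, where u = "\<lambda>\<tau>. indicator D (\<tau>,t) * \<bar>k (\<tau>,t)\<bar>"
        and v = "\<lambda>\<tau>. indicator {a..b} \<tau> * \<bar>f \<tau>\<bar>" and U = U2 and V = V])
    show "AE x in lborel. \<bar>indicator {t..b} x *\<^sub>R (k (x, t) * f x)\<bar>
          \<le> indicator D (x, t) * \<bar>k (x, t)\<bar> * (indicator {a..b} x * \<bar>f x\<bar>)"
      using AE_lborel_singleton[of t]
    proof eventually_elim
      case (elim x)
      then show ?case using t by (auto simp: indicator_def D_def abs_mult)
    qed
    show "(indicator D (x, t) * \<bar>k (x, t)\<bar>) powr q \<le> U2 x" for x
      using q1 by (subst powr_ind_le) (auto simp: U2_def)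
  qed (use U2m Vm Vb' UI2 VI' in auto)
  have "\<bar>KP lam mu k a b f t\<bar> \<le> \<bar>lam\<bar> * \<bar>LINT \<tau>:{a..t}|lborel. k (t, \<tau>) * f \<tau>\<bar>
        + \<bar>mu\<bar> * \<bar>LINT \<tau>:{t..b}|lborel. k (\<tau>, t) * f \<tau>\<bar>"
    unfolding KP_def by (simp add: abs_mult[symmetric] abs_triangle_ineq)
  also have "\<dots> \<le> \<bar>lam\<bar> * (\<kappa> * \<rho>) + \<bar>mu\<bar> * (\<kappa> * \<rho>)"
    using T1 T2 by (intro add_mono mult_left_mono) auto
  finally show ?thesis by (simp add: \<kappa>_def \<rho>_def algebra_simps)
qed

lemma kernel_facts:
  fixes k :: "real \<times> real \<Rightarrow> real" and D :: "(real \<times> real) set" and q :: real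
  assumes ki: "set_integrable lborel D (\<lambda>z. \<bar>k z\<bar> powr q)"
  defines "kq \<equiv> (\<lambda>z. indicator D z * \<bar>k z\<bar> powr q)"
  defines "w \<equiv> (\<lambda>t. (\<integral>\<^sup>+\<tau>. ennreal (kq (t,\<tau>)) \<partial>lborel) + (\<integral>\<^sup>+\<tau>. ennreal (kq (\<tau>,t)) \<partial>lborel))"
  shows "kq \<in> borel_measurable lborel" "w \<in> borel_measurable lborel"
    "(\<integral>\<^sup>+t. w t \<partial>lborel) \<noteq> \<infinity>"
proof -
  have int: "integrable lborel kq" using ki by (simp add: set_integrable_def kq_def)
  show km: "kq \<in> borel_measurable lborel" using int by (rule borel_measurable_integrable)
  have km2: "(\<lambda>z. ennreal (kq z)) \<in> borel_measurable (lborel \<Otimes>\<^sub>M lborel)"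
    using km by (simp add: lborel_prod)
  have fin: "(\<integral>\<^sup>+z. ennreal (kq z) \<partial>lborel) < \<infinity>"
    using integrableD(2)[OF int] by (simp add: kq_def top.not_eq_extremum)
  have m1: "(\<lambda>t. \<integral>\<^sup>+\<tau>. ennreal (kq (t,\<tau>)) \<partial>lborel) \<in> borel_measurable lborel"
    using lborel.borel_measurable_nn_integral_fst[OF km2] by simp
  have km3: "(\<lambda>z. ennreal (kq (snd z, fst z))) \<in> borel_measurable (lborel \<Otimes>\<^sub>M lborel)"
    using km2 by measurable
  have m2: "(\<lambda>t. \<integral>\<^sup>+\<tau>. ennreal (kq (\<tau>,t)) \<partial>lborel) \<in> borel_measurable lborel"
    using lborel.borel_measurable_nn_integral_fst[OF km3] by simp
  show "w \<in> borel_measurable lborel" unfolding w_def using m1 m2 by simp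
  have e1: "(\<integral>\<^sup>+t. \<integral>\<^sup>+\<tau>. ennreal (kq (t,\<tau>)) \<partial>lborel \<partial>lborel) = (\<integral>\<^sup>+z. ennreal (kq z) \<partial>lborel)"
    using lborel.nn_integral_fst[OF km2] by (simp add: lborel_prod)
  have e2: "(\<integral>\<^sup>+t. \<integral>\<^sup>+\<tau>. ennreal (kq (\<tau>,t)) \<partial>lborel \<partial>lborel) = (\<integral>\<^sup>+z. ennreal (kq z) \<partial>lborel)"
    using lborel_pair.nn_integral_snd[OF km2] by (simp add: lborel_prod)
  have "(\<integral>\<^sup>+t. w t \<partial>lborel) = (\<integral>\<^sup>+z. ennreal (kq z) \<partial>lborel) + (\<integral>\<^sup>+z. ennreal (kq z) \<partial>lborel)"
    unfolding w_def using m1 m2 by (simp add: nn_integral_add e1 e2)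
  thus "(\<integral>\<^sup>+t. w t \<partial>lborel) \<noteq> \<infinity>" using fin by (simp add: ennreal_add_eq_top)
qed

lemma nn_const_interval:
  fixes a b c :: real assumes "a \<le> b" "0 \<le> c"
  shows "(\<integral>\<^sup>+\<tau>. ennreal (indicator {a..b} \<tau> * c) \<partial>lborel) = ennreal ((b - a) * c)"
proof -
  have "(\<integral>\<^sup>+\<tau>. ennreal (indicator {a..b} \<tau> * c) \<partial>lborel) = (\<integral>\<^sup>+\<tau>. ennreal c * indicator {a..b} \<tau> \<partial>lborel)"
    by (intro nn_integral_cong) (auto simp: indicator_def)
  also have "\<dots> = ennreal c * ennreal (b - a)" using assms by (simp add: nn_integral_cmult_indicator)
  also have "\<dots> = ennreal ((b - a) * c)" using assms by (simp add: ennreal_mult'[symmetric] mult.commute)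
  finally show ?thesis .
qed

lemma y_bound:
  fixes a b p q ya R t :: real and y g :: "real \<Rightarrow> real"
  assumes pq: "1 < p" "q = p / (p - 1)" and ab: "a < b" and t: "a \<le> t" "t \<le> b"
    and gm: "(\<lambda>t. indicator {a..b} t * \<bar>g t\<bar> powr p) \<in> borel_measurable lborel"
    and gI: "(\<integral>\<^sup>+t. ennreal (indicator {a..b} t * \<bar>g t\<bar> powr p) \<partial>lborel) \<le> ennreal (R powr p)"
    and R1: "1 \<le> R"
    and yt: "y t = ya + (LINT s:{a..t}|lborel. g s)"
  shows "\<bar>y t\<bar> \<le> (\<bar>ya\<bar> + (b - a) + 1) * R"
proof -
  have q1: "q > 1" using pq by (simp add: less_divide_eq)
  define \<kappa> where "\<kappa> = (b - a + 1) powr (1/q)"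
  have k0: "0 < \<kappa>" using ab by (simp add: \<kappa>_def)
  have kq: "\<kappa> powr q = b - a + 1" using ab q1 by (simp add: \<kappa>_def powr_powr)
  have kle: "\<kappa> \<le> b - a + 1"
  proof -
    have "\<kappa> = \<kappa> powr 1" using k0 by simp
    also have "\<dots> \<le> \<kappa> powr q"
    proof (cases "\<kappa> \<ge> 1")
      case True thus ?thesis using q1 by (intro powr_mono) auto
    next
      case False
      have "\<kappa> powr q \<le> 1 powr q" using k0 q1 False by (intro powr_mono2) auto
      thus ?thesis using kq ab by simp
    qed
    finally show ?thesis using kq by simp
  qed
  have "\<bar>LINT s:{a..t}|lborel. g s\<bar> \<le> \<kappa> * R"
    unfolding set_lebesgue_integral_def
  proof (rule young_integral[OF pq k0, where u = "\<lambda>\<tau>. indicator {a..b} \<tau>"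
        and v = "\<lambda>\<tau>. indicator {a..b} \<tau> * \<bar>g \<tau>\<bar>" and U = "\<lambda>\<tau>. indicator {a..b} \<tau>"
        and V = "\<lambda>t. indicator {a..b} t * \<bar>g t\<bar> powr p"])
    show "0 < R" using R1 by simp
    show "AE x in lborel. \<bar>indicator {a..t} x *\<^sub>R g x\<bar> \<le> indicator {a..b} x * (indicator {a..b} x * \<bar>g x\<bar>)"
      using t by (auto simp: indicator_def)
    show "(indicator {a..b} x) powr q \<le> indicator {a..b} x" for x :: real
      by (auto simp: indicator_def)
    show "(indicator {a..b} x * \<bar>g x\<bar>) powr p \<le> indicator {a..b} x * \<bar>g x\<bar> powr p" for x
      using pq by (subst powr_ind_le) auto
    have "(\<integral>\<^sup>+x. ennreal (indicator {a..b} x) \<partial>lborel) = ennreal (b - a)"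
      using nn_const_interval[of a b 1] ab by simp
    also have "\<dots> \<le> ennreal (\<kappa> powr q)" using kq by (simp add: ennreal_leI)
    finally show "(\<integral>\<^sup>+x. ennreal (indicator {a..b} x) \<partial>lborel) \<le> ennreal (\<kappa> powr q)" .
  qed (use gm gI in auto)
  hence "\<bar>y t\<bar> \<le> \<bar>ya\<bar> + \<kappa> * R" using yt by linarith
  also have "\<dots> \<le> \<bar>ya\<bar> * R + (b - a + 1) * R"
    using kle R1 ab by (intro add_mono mult_right_mono) (auto simp: mult_le_cancel_left1)
  finally show ?thesis by (simp add: algebra_simps)
qed

lemma Lp_norm_const_bound:
  fixes a b p B :: real and y :: "real \<Rightarrow> real"
  assumes "a \<le> b" "0 < p" "0 \<le> B" "\<And>t. t \<in> {a..b} \<Longrightarrow> \<bar>y t\<bar> \<le> B"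
  shows "Lp_norm p a b y \<le> (b - a) powr (1/p) * B"
proof -
  have "ennreal \<bar>LINT t:{a..b}|lborel. \<bar>y t\<bar> powr p\<bar> \<le> (\<integral>\<^sup>+t. ennreal \<bar>indicator {a..b} t *\<^sub>R \<bar>y t\<bar> powr p\<bar> \<partial>lborel)"
    unfolding set_lebesgue_integral_def by (rule abs_integral_le_nn)
  also have "\<dots> \<le> (\<integral>\<^sup>+t. ennreal (indicator {a..b} t * B powr p) \<partial>lborel)"
    using assms by (intro nn_integral_mono) (auto simp: indicator_def intro!: powr_mono2)
  also have "\<dots> = ennreal ((b - a) * B powr p)" using assms by (simp add: nn_const_interval)
  finally have I: "\<bar>LINT t:{a..b}|lborel. \<bar>y t\<bar> powr p\<bar> \<le> (b - a) * B powr p"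
    using assms by (simp add: ennreal_le_iff)
  have I0: "0 \<le> (LINT t:{a..b}|lborel. \<bar>y t\<bar> powr p)"
    unfolding set_lebesgue_integral_def by (intro integral_nonneg_AE) (auto simp: indicator_def)
  have "Lp_norm p a b y \<le> ((b - a) * B powr p) powr (1/p)"
    unfolding Lp_norm_def using I I0 assms by (intro powr_mono2) auto
  also have "\<dots> = (b - a) powr (1/p) * B" using assms by (simp add: powr_mult powr_powr)
  finally show ?thesis .
qed

lemma term_bound:
  fixes x1 x2 x3 x4 C1 C4 R u p q d1 d2 d3 d4 s :: real
  assumes b1: "\<bar>x1\<bar> \<le> C1 * R" and b2: "\<bar>x2\<bar> \<le> C4 * R * u powr (1/q)"
    and b4: "\<bar>x4\<bar> \<le> C4 * R * u powr (1/q)"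
    and u1: "1 \<le> u" and R1: "1 \<le> R" and C: "0 < C1" "0 < C4" and pq: "0 < q" "0 < p"
    and d: "0 \<le> d1" "0 \<le> d2" "0 \<le> d3" "0 \<le> d4" "(d2 + d4) / q + d3 / p \<le> 1"
    and s: "d1 + d2 + d3 + d4 \<le> s"
  shows "pw x1 d1 * pw x2 d2 * pw x3 d3 * pw x4 d4
         \<le> C1 powr d1 * C4 powr (d2 + d4) * R powr s * (u + \<bar>x3\<bar> powr p / R powr p + 1)"
proof -
  define X2 where "X2 = C4 * R * u powr (1/q)"
  have X2: "0 < X2" using C R1 u1 by (simp add: X2_def)
  have p1: "pw x1 d1 \<le> (C1 * R) powr d1" "0 \<le> pw x1 d1" using pw_mono[OF b1 _ d(1)] C R1 by auto
  have p2: "pw x2 d2 \<le> X2 powr d2" "0 \<le> pw x2 d2" using pw_mono[OF b2[folded X2_def] X2 d(2)] by auto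
  have p4: "pw x4 d4 \<le> X2 powr d4" "0 \<le> pw x4 d4" using pw_mono[OF b4[folded X2_def] X2 d(4)] by auto
  have p3: "0 \<le> pw x3 d3" by (simp add: pw_def)
  have "pw x1 d1 * pw x2 d2 * pw x3 d3 * pw x4 d4 = pw x1 d1 * (pw x2 d2 * pw x4 d4) * pw x3 d3"
    by (simp add: mult_ac)
  also have "\<dots> \<le> (C1 * R) powr d1 * (X2 powr d2 * X2 powr d4) * pw x3 d3"
    using p1 p2 p4 p3 by (intro mult_mono mult_nonneg_nonneg) auto
  also have "X2 powr d2 * X2 powr d4 = (C4 * R) powr (d2 + d4) * u powr ((d2 + d4) / q)"
    using X2 C R1 u1 pq by (simp add: X2_def powr_add powr_mult powr_powr add_divide_distrib mult_ac)
  also have "(C1 * R) powr d1 * ((C4 * R) powr (d2 + d4) * u powr ((d2 + d4) / q)) * pw x3 d3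
      = (C1 * R) powr d1 * (C4 * R) powr (d2 + d4) * (u powr ((d2 + d4) / q) * pw x3 d3)"
    by (simp add: mult_ac)
  also have "\<dots> \<le> (C1 * R) powr d1 * (C4 * R) powr (d2 + d4) * (R powr d3 * (u + \<bar>x3\<bar> powr p / R powr p + 1))"
    using pw_g_bound[OF u1, of R "(d2 + d4) / q" d3 p x3] R1 pq d
    by (intro mult_left_mono) auto
  also have "\<dots> = C1 powr d1 * C4 powr (d2 + d4) * R powr (d1 + d2 + d3 + d4) * (u + \<bar>x3\<bar> powr p / R powr p + 1)"
    using C R1 by (simp add: powr_mult powr_add mult_ac)
  also have "\<dots> \<le> C1 powr d1 * C4 powr (d2 + d4) * R powr s * (u + \<bar>x3\<bar> powr p / R powr p + 1)"
    using R1 s u1 C by (intro mult_right_mono mult_left_mono powr_mono) auto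
  finally show ?thesis .
qed

lemma ext_lower:
  fixes a b Hval \<beta> :: real and f H Sb :: "real \<Rightarrow> real"
  assumes Hm: "H \<in> borel_measurable lborel" and Sm: "Sb \<in> borel_measurable lborel"
    and H0: "\<And>t. 0 \<le> H t" and S0: "\<And>t. 0 \<le> Sb t"
    and HI: "(\<integral>\<^sup>+t. ennreal (H t) \<partial>lborel) = ennreal Hval"
    and SI: "(\<integral>\<^sup>+t. ennreal (Sb t) \<partial>lborel) \<le> ennreal \<beta>" and \<beta>0: "0 \<le> \<beta>"
    and Hout: "\<And>t. t \<notin> {a..b} \<Longrightarrow> H t = 0"
    and fb: "AE t in lborel. t \<in> {a..b} \<longrightarrow> H t - Sb t \<le> f t"
  shows "ereal (Hval - 2 * \<beta>) \<le> ext_integral a b f"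
proof -
  define A where "A = (\<integral>\<^sup>+ t\<in>{a..b}. ennreal (f t) \<partial>lborel)"
  define B where "B = (\<integral>\<^sup>+ t\<in>{a..b}. ennreal (- f t) \<partial>lborel)"
  have B: "B \<le> ennreal \<beta>"
  proof -
    have "B \<le> (\<integral>\<^sup>+t. ennreal (Sb t) \<partial>lborel)"
      unfolding B_def
    proof (rule nn_integral_mono_AE)
      show "AE t in lborel. ennreal (- f t) * indicator {a..b} t \<le> ennreal (Sb t)"
        using fb
      proof eventually_elim
        case (elim t)
        show ?case
        proof (cases "t \<in> {a..b}")
          case True
          hence "- f t \<le> Sb t" using elim H0[of t] by linarith
          thus ?thesis using True by (simp add: ennreal_leI)
        qed simp
      qed
    qed
    thus ?thesis using SI by simp
  qed
  define h where "h = (\<lambda>t. max 0 (H t - Sb t))"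
  have hm: "h \<in> borel_measurable lborel" using Hm Sm by (simp add: h_def)
  have "ennreal Hval \<le> (\<integral>\<^sup>+t. ennreal (h t) + ennreal (Sb t) \<partial>lborel)"
    unfolding HI[symmetric]
    by (intro nn_integral_mono) (auto simp: h_def S0 ennreal_plus[symmetric] simp del: ennreal_plus intro!: ennreal_leI)
  also have "\<dots> = (\<integral>\<^sup>+t. ennreal (h t) \<partial>lborel) + (\<integral>\<^sup>+t. ennreal (Sb t) \<partial>lborel)"
    using hm Sm by (simp add: nn_integral_add)
  finally have AH0: "ennreal Hval \<le> (\<integral>\<^sup>+t. ennreal (h t) \<partial>lborel) + (\<integral>\<^sup>+t. ennreal (Sb t) \<partial>lborel)" .
  have hA: "(\<integral>\<^sup>+t. ennreal (h t) \<partial>lborel) \<le> A"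
    unfolding A_def
  proof (rule nn_integral_mono_AE)
    show "AE t in lborel. ennreal (h t) \<le> ennreal (f t) * indicator {a..b} t"
      using fb
    proof eventually_elim
      case (elim t)
      show ?case
      proof (cases "t \<in> {a..b}")
        case True
        hence "h t \<le> max 0 (f t)" using elim by (auto simp: h_def)
        hence "ennreal (h t) \<le> ennreal (max 0 (f t))" by (rule ennreal_leI)
        also have "ennreal (max 0 (f t)) = ennreal (f t)" by (cases "f t \<ge> 0") (auto simp: max_def ennreal_neg)
        finally show ?thesis using True by simp
      next
        case False
        thus ?thesis using Hout[OF False] S0[of t] by (simp add: h_def)
      qed
    qed
  qed
  have AH: "ennreal Hval \<le> A + ennreal \<beta>"
    using order_trans[OF AH0 add_mono[OF hA SI]] .
  show ?thesis
  proof (cases "A = top")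
    case True
    have "B \<noteq> top" using B by (auto simp: top_unique)
    then obtain bb where "B = ennreal bb" by (cases B) auto
    thus ?thesis using True unfolding ext_integral_def A_def[symmetric] B_def[symmetric] by simp
  next
    case False
    then obtain aa where aa: "A = ennreal aa" "0 \<le> aa" by (cases A) auto
    have "B \<noteq> top" using B by (auto simp: top_unique)
    then obtain bb where bb: "B = ennreal bb" "0 \<le> bb" by (cases B) auto
    have "bb \<le> \<beta>" using B bb \<beta>0 by (simp add: ennreal_le_iff)
    moreover have "Hval \<le> aa + \<beta>"
    proof (cases "Hval \<ge> 0")
      case True
      thus ?thesis using AH aa \<beta>0 by (simp add: ennreal_plus[symmetric] del: ennreal_plus)
    qed (use aa \<beta>0 in auto)
    ultimately show ?thesis
      unfolding ext_integral_def A_def[symmetric] B_def[symmetric] using aa bb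
      by (simp add: enn2ereal_ennreal)
  qed
qed

theorem mainTheorem15:
  fixes a b p q lam mu ya c0 :: real
    and k :: "real \<times> real \<Rightarrow> real"
    and F :: "real \<Rightarrow> real \<Rightarrow> real \<Rightarrow> real \<Rightarrow> real \<Rightarrow> real"
    and N :: nat and c d1 d2 d3 d4 :: "nat \<Rightarrow> real"
  assumes "a < b" and "1 < p" and "q = p / (p - 1)"
    and "set_borel_measurable lborel {(t, \<tau>). a \<le> \<tau> \<and> \<tau> < t \<and> t \<le> b} k"
    and "set_integrable lborel {(t, \<tau>). a \<le> \<tau> \<and> \<tau> < t \<and> t \<le> b} (\<lambda>z. \<bar>k z\<bar> powr q)"
    and "C1_on (UNIV \<times> UNIV \<times> UNIV \<times> UNIV \<times> {a..b})
           (\<lambda>(x1, x2, x3, x4, t). F x1 x2 x3 x4 t)"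
    and "c0 > 0"
    and "\<forall>j\<in>{1..N}. 0 \<le> d1 j \<and> 0 \<le> d2 j \<and> d2 j \<le> q \<and> 0 \<le> d3 j \<and> d3 j \<le> p
           \<and> 0 \<le> d4 j \<and> d4 j \<le> q \<and> d2 j + (q / p) * d3 j + d4 j \<le> q
           \<and> 0 \<le> d1 j + d2 j + d3 j + d4 j \<and> d1 j + d2 j + d3 j + d4 j < p"
    and "\<forall>x1 x2 x3 x4 t. t \<in> {a..b} \<longrightarrow>
           F x1 x2 x3 x4 t \<ge> c0 * \<bar>x3\<bar> powr p
             + (\<Sum>j=1..N. c j * pw x1 (d1 j) * pw x2 (d2 j) * pw x3 (d3 j) * pw x4 (d4 j))"
  shows "coercive_on {y \<in> W1p p a b. y a = ya} (W1p_norm p a b) (Ifun F lam mu k a b p)"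
proof -
  note ab = assms(1) and pq = assms(2,3) and c0 = assms(7) and dj = assms(8) and Fb = assms(9)
  have q1: "q > 1" using pq by (simp add: less_divide_eq)
  have p0: "0 < p" using pq by simp
  define D where "D = {(t, \<tau>). a \<le> \<tau> \<and> \<tau> < t \<and> t \<le> b}"
  have ki: "set_integrable lborel D (\<lambda>z. \<bar>k z\<bar> powr q)" using assms(5) by (simp add: D_def)
  define kq where "kq = (\<lambda>z. indicator D z * \<bar>k z\<bar> powr q)"
  define w where "w = (\<lambda>t. (\<integral>\<^sup>+\<tau>. ennreal (kq (t,\<tau>)) \<partial>lborel) + (\<integral>\<^sup>+\<tau>. ennreal (kq (\<tau>,t)) \<partial>lborel))"
  note kf = kernel_facts[OF ki]
  have kqm: "kq \<in> borel_measurable lborel" using kf(1) by (simp add: kq_def)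
  have wm: "w \<in> borel_measurable lborel" using kf(2) by (simp add: w_def kq_def)
  have wfin: "(\<integral>\<^sup>+t. w t \<partial>lborel) \<noteq> \<infinity>" using kf(3) by (simp add: w_def kq_def)
  define wr where "wr = (\<lambda>t. enn2real (w t))"
  have wr0: "0 \<le> wr t" for t by (simp add: wr_def)
  have wAE: "AE t in lborel. w t = ennreal (wr t)"
    using nn_integral_PInf_AE[OF wm wfin]
    by eventually_elim (simp add: wr_def ennreal_enn2real top.not_eq_extremum)
  define Wtot where "Wtot = enn2real (\<integral>\<^sup>+t. w t \<partial>lborel)"
  have Wtot0: "0 \<le> Wtot" by (simp add: Wtot_def)
  have Wtot_eq: "(\<integral>\<^sup>+t. w t \<partial>lborel) = ennreal Wtot"
    using wfin by (simp add: Wtot_def ennreal_enn2real top.not_eq_extremum)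
  have wrm: "wr \<in> borel_measurable lborel" using wm by (simp add: wr_def)
  have wrI: "(\<integral>\<^sup>+t. ennreal (indicator {a..b} t * (wr t + 2)) \<partial>lborel) \<le> ennreal (Wtot + 2 * (b - a))"
  proof -
    have "(\<integral>\<^sup>+t. ennreal (indicator {a..b} t * (wr t + 2)) \<partial>lborel)
        = (\<integral>\<^sup>+t. ennreal (indicator {a..b} t * wr t) + ennreal (indicator {a..b} t * 2) \<partial>lborel)"
      by (intro nn_integral_cong) (auto simp: indicator_def wr0 ennreal_plus[symmetric] simp del: ennreal_plus)
    also have "\<dots> = (\<integral>\<^sup>+t. ennreal (indicator {a..b} t * wr t) \<partial>lborel) + (\<integral>\<^sup>+t. ennreal (indicator {a..b} t * 2) \<partial>lborel)"
      using wrm by (simp add: nn_integral_add)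
    also have "(\<integral>\<^sup>+t. ennreal (indicator {a..b} t * 2) \<partial>lborel) = ennreal (2 * (b - a))"
      using nn_const_interval[of a b 2] ab by (simp add: mult.commute)
    also have "(\<integral>\<^sup>+t. ennreal (indicator {a..b} t * wr t) \<partial>lborel) \<le> (\<integral>\<^sup>+t. w t \<partial>lborel)"
    proof (rule nn_integral_mono)
      fix t
      show "ennreal (indicator {a..b} t * wr t) \<le> w t"
      proof (cases "w t = top")
        case False
        have "ennreal (indicator {a..b} t * wr t) \<le> ennreal (wr t)"
          using wr0[of t] by (intro ennreal_leI) (auto simp: indicator_def)
        also have "\<dots> = w t" using False by (simp add: wr_def ennreal_enn2real top.not_eq_extremum)
        finally show ?thesis .
      qed simp
    qed
    finally show ?thesis using Wtot_eq Wtot0 ab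
      by (simp add: ennreal_plus[symmetric] del: ennreal_plus) 
  qed
  define L where "L = \<bar>lam\<bar> + \<bar>mu\<bar>"
  define C1 where "C1 = \<bar>ya\<bar> + (b - a) + 1"
  define C4 where "C4 = L * ((b - a + 1) powr (1/p) * C1 + 1) + 1"
  define C2 where "C2 = (b - a) powr (1/p) * C1 + 1"
  have L0: "0 \<le> L" by (simp add: L_def)
  have C1: "1 \<le> C1" using ab by (simp add: C1_def)
  have C4: "1 \<le> C4" using L0 C1 by (simp add: C4_def)
  have C2: "1 \<le> C2" using C1 by (simp add: C2_def)
  define sf where "sf = (\<lambda>j. d1 j + d2 j + d3 j + d4 j)"
  define sstar where "sstar = Max (insert 0 (sf ` {1..N}))"
  have sstar0: "0 \<le> sstar" by (simp add: sstar_def)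
  have sstarp: "sstar < p" using dj p0 by (simp add: sstar_def sf_def)
  have sfle: "sf j \<le> sstar" if "j \<in> {1..N}" for j unfolding sstar_def using that by (intro Max_ge) auto
  define Aj where "Aj = (\<lambda>j. \<bar>c j\<bar> * C1 powr d1 j * C4 powr (d2 j + d4 j))"
  define Atot where "Atot = (\<Sum>j=1..N. Aj j)"
  have Atot0: "0 \<le> Atot" by (simp add: Atot_def Aj_def sum_nonneg)
  define E where "E = Wtot + 2 * (b - a) + 1"
  have E0: "0 \<le> E" using Wtot0 ab by (simp add: E_def)
  have key: "\<exists>R\<ge>1. W1p_norm p a b y \<le> C2 * R \<and>
      ereal (c0 * (R powr p - 1) - (2 * Atot * E) * R powr sstar) \<le> Ifun F lam mu k a b p y"
    if yW: "y \<in> W1p p a b" and ya: "y a = ya" for y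
  proof -
    obtain g0 where g0: "is_wderiv p a b y g0" using yW by (auto simp: W1p_def)
    define g where "g = wderiv p a b y"
    have isw: "is_wderiv p a b y g" unfolding g_def wderiv_def by (rule someI[of "is_wderiv p a b y" g0, OF g0])
    have Lp: "Lp_on p a b g" and yeq: "\<And>t. t \<in> {a..b} \<Longrightarrow> y t = y a + (LINT s:{a..t}|lborel. g s)"
      using isw unfolding is_wderiv_def by blast+
    have gint: "integrable lborel (\<lambda>x. indicator {a..b} x * \<bar>g x\<bar> powr p)"
      using Lp by (simp add: Lp_on_def set_integrable_def)
    have gm: "(\<lambda>x. indicator {a..b} x * \<bar>g x\<bar> powr p) \<in> borel_measurable lborel"
      using gint by (rule borel_measurable_integrable)
    define G where "G = (LINT t:{a..b}|lborel. \<bar>g t\<bar> powr p)"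
    have GI: "(\<integral>\<^sup>+x. ennreal (indicator {a..b} x * \<bar>g x\<bar> powr p) \<partial>lborel) = ennreal G"
      unfolding G_def set_lebesgue_integral_def
      using nn_integral_eq_integral[OF gint] by simp
    have G0: "0 \<le> G" unfolding G_def set_lebesgue_integral_def
      by (intro integral_nonneg_AE) (auto simp: indicator_def)
    define R where "R = (G + 1) powr (1/p)"
    have R1: "1 \<le> R" using G0 p0 by (simp add: R_def ge_one_powr_ge_zero)
    have Rp: "R powr p = G + 1" using G0 p0 by (simp add: R_def powr_powr)
    have gI': "(\<integral>\<^sup>+x. ennreal (indicator {a..b} x * \<bar>g x\<bar> powr p) \<partial>lborel) \<le> ennreal (R powr p)"
      using GI Rp by (simp add: ennreal_leI)
    have ybd: "\<bar>y t\<bar> \<le> C1 * R" if "t \<in> {a..b}" for t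
      using y_bound[OF pq ab _ _ gm gI' R1, of t y ya] yeq[OF that] ya that
      by (simp add: C1_def)
    have nb: "W1p_norm p a b y \<le> C2 * R"
    proof -
      have "Lp_norm p a b y \<le> (b - a) powr (1/p) * (C1 * R)"
        using Lp_norm_const_bound[of a b p "C1 * R" y] ab p0 C1 R1 ybd by auto
      moreover have "Lp_norm p a b (wderiv p a b y) \<le> R"
        unfolding Lp_norm_def g_def[symmetric] G_def[symmetric] R_def
        using G0 p0 by (intro powr_mono2) auto
      ultimately show ?thesis by (simp add: W1p_norm_def C2_def algebra_simps)
    qed
    have kqm': "(\<lambda>z. indicator {(t, \<tau>). a \<le> \<tau> \<and> \<tau> < t \<and> t \<le> b} z * \<bar>k z\<bar> powr q) \<in> borel_measurable lborel"
      using kqm by (simp add: kq_def D_def)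
    have KPb: "AE t in lborel. t \<in> {a..b} \<longrightarrow>
        \<bar>KP lam mu k a b y t\<bar> \<le> C4 * R * (wr t + 1) powr (1/q) \<and>
        \<bar>KP lam mu k a b g t\<bar> \<le> C4 * R * (wr t + 1) powr (1/q)"
      using wAE
    proof eventually_elim
      case (elim t)
      show ?case
      proof
        assume t: "t \<in> {a..b}"
        have Kt: "(\<integral>\<^sup>+\<tau>. ennreal (indicator {(t, \<tau>). a \<le> \<tau> \<and> \<tau> < t \<and> t \<le> b} (t,\<tau>) * \<bar>k (t,\<tau>)\<bar> powr q) \<partial>lborel)
            + (\<integral>\<^sup>+\<tau>. ennreal (indicator {(t, \<tau>). a \<le> \<tau> \<and> \<tau> < t \<and> t \<le> b} (\<tau>,t) * \<bar>k (\<tau>,t)\<bar> powr q) \<partial>lborel) \<le> ennreal (wr t)"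
          using elim by (simp add: w_def kq_def D_def)
        define \<kappa> where "\<kappa> = (wr t + 1) powr (1/q)"
        have \<kappa>0: "0 < \<kappa>" using wr0[of t] by (simp add: \<kappa>_def)
        have CR1: "1 \<le> C1 * R" using mult_mono[OF C1 R1] C1 by simp
        define P where "P = (b - a) * (C1 * R) powr p"
        have P0: "0 \<le> P" using ab by (simp add: P_def)
        have ky: "\<bar>KP lam mu k a b y t\<bar> \<le> (\<bar>lam\<bar> + \<bar>mu\<bar>) * ((wr t + 1) powr (1/q) * (P + 1) powr (1/p))"
        proof (rule KP_bound[OF pq _ _ kqm' Kt wr0])
          show "a \<le> t" "t \<le> b" using t by auto
          show "(\<lambda>\<tau>. indicator {a..b} \<tau> * (C1 * R) powr p) \<in> borel_measurable lborel" by simp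
          show "indicator {a..b} \<tau> * \<bar>y \<tau>\<bar> powr p \<le> indicator {a..b} \<tau> * (C1 * R) powr p" for \<tau>
            using ybd[of \<tau>] p0 by (cases "\<tau> \<in> {a..b}") (auto intro: powr_mono2)
          show "(\<integral>\<^sup>+\<tau>. ennreal (indicator {a..b} \<tau> * (C1 * R) powr p) \<partial>lborel) \<le> ennreal P"
            using nn_const_interval[of a b "(C1 * R) powr p"] ab by (simp add: P_def)
          show "0 \<le> P" by (fact P0)
        qed
        have "(P + 1) powr (1/p) \<le> ((b - a + 1) * (C1 * R) powr p) powr (1/p)"
        proof (intro powr_mono2)
          have "1 \<le> (C1 * R) powr p" using CR1 p0 by (simp add: ge_one_powr_ge_zero)
          thus "P + 1 \<le> (b - a + 1) * (C1 * R) powr p" by (simp add: P_def algebra_simps)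
        qed (use P0 p0 in auto)
        also have "\<dots> = (b - a + 1) powr (1/p) * (C1 * R)"
          using ab CR1 p0 C1 R1 by (simp add: powr_mult powr_powr)
        finally have Pb: "(P + 1) powr (1/p) \<le> (b - a + 1) powr (1/p) * (C1 * R)" .
        have "L * (\<kappa> * (P + 1) powr (1/p)) \<le> L * (\<kappa> * ((b - a + 1) powr (1/p) * (C1 * R)))"
          using Pb \<kappa>0 L0 by (intro mult_left_mono) auto
        hence "\<bar>KP lam mu k a b y t\<bar> \<le> L * (\<kappa> * ((b - a + 1) powr (1/p) * (C1 * R)))"
          using ky unfolding L_def[symmetric] \<kappa>_def[symmetric] by linarith
        also have "\<dots> \<le> C4 * R * \<kappa>"
        proof -
          have "L * ((b - a + 1) powr (1/p) * C1) \<le> C4" by (simp add: C4_def algebra_simps L0)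
          hence "L * ((b - a + 1) powr (1/p) * C1) * (R * \<kappa>) \<le> C4 * (R * \<kappa>)"
            using R1 \<kappa>0 by (intro mult_right_mono) auto
          thus ?thesis by (simp add: mult_ac)
        qed
        finally have A1: "\<bar>KP lam mu k a b y t\<bar> \<le> C4 * R * \<kappa>" .
        have kg: "\<bar>KP lam mu k a b g t\<bar> \<le> (\<bar>lam\<bar> + \<bar>mu\<bar>) * ((wr t + 1) powr (1/q) * (G + 1) powr (1/p))"
        proof (rule KP_bound[OF pq _ _ kqm' Kt wr0 gm])
          show "a \<le> t" "t \<le> b" using t by auto
        qed (use GI G0 in auto)
        have "\<bar>KP lam mu k a b g t\<bar> \<le> L * (\<kappa> * R)"
          using kg unfolding L_def[symmetric] \<kappa>_def[symmetric] R_def[symmetric] .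
        also have "\<dots> \<le> C4 * R * \<kappa>"
        proof -
          have "0 \<le> (b - a + 1) powr (1/p) * C1" using C1 by simp
          hence "0 \<le> L * ((b - a + 1) powr (1/p) * C1)" using L0 by simp
          hence "L \<le> L * ((b - a + 1) powr (1/p) * C1 + 1)" by (simp add: distrib_left)
          hence "L \<le> C4" by (simp add: C4_def)
          hence "L * (\<kappa> * R) \<le> C4 * (\<kappa> * R)" using R1 \<kappa>0 by (intro mult_right_mono) auto
          thus ?thesis by (simp add: mult_ac)
        qed
        finally have A2: "\<bar>KP lam mu k a b g t\<bar> \<le> C4 * R * \<kappa>" .
        show "\<bar>KP lam mu k a b y t\<bar> \<le> C4 * R * (wr t + 1) powr (1/q) \<and>
          \<bar>KP lam mu k a b g t\<bar> \<le> C4 * R * (wr t + 1) powr (1/q)"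
          using A1 A2 by (simp add: \<kappa>_def)
      qed
    qed
    have Fbd: "AE t in lborel. t \<in> {a..b} \<longrightarrow>
        c0 * \<bar>g t\<bar> powr p - Atot * R powr sstar * (wr t + 2 + \<bar>g t\<bar> powr p / R powr p)
        \<le> F (y t) (KP lam mu k a b y t) (g t) (BP lam mu k a b p y t) t"
      using KPb
    proof eventually_elim
      case (elim t)
      show ?case
      proof
        assume t: "t \<in> {a..b}"
        define Z where "Z = wr t + 1 + \<bar>g t\<bar> powr p / R powr p + 1"
        have Zeq: "wr t + 2 + \<bar>g t\<bar> powr p / R powr p = Z" by (simp add: Z_def)
        have BPe: "BP lam mu k a b p y t = KP lam mu k a b g t" by (simp add: BP_def g_def)
        have tj: "- (Aj j * R powr sstar * Z) \<le> c j * pw (y t) (d1 j) * pw (KP lam mu k a b y t) (d2 j)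
              * pw (g t) (d3 j) * pw (BP lam mu k a b p y t) (d4 j)" if j: "j \<in> {1..N}" for j
        proof -
          have dj': "0 \<le> d1 j" "0 \<le> d2 j" "0 \<le> d3 j" "0 \<le> d4 j"
            "d2 j + (q / p) * d3 j + d4 j \<le> q" using dj j by auto
          have dd: "(d2 j + d4 j) / q + d3 j / p \<le> 1"
          proof -
            have "(d2 j + d4 j) / q + d3 j / p = (d2 j + (q / p) * d3 j + d4 j) / q"
              using q1 p0 by (simp add: field_simps)
            also have "\<dots> \<le> 1" using dj'(5) q1 by simp
            finally show ?thesis .
          qed
          define Pj where "Pj = pw (y t) (d1 j) * pw (KP lam mu k a b y t) (d2 j)
              * pw (g t) (d3 j) * pw (BP lam mu k a b p y t) (d4 j)"
          have Pj0: "0 \<le> Pj" by (simp add: Pj_def pw_def)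
          have "Pj \<le> C1 powr d1 j * C4 powr (d2 j + d4 j) * R powr sstar * Z"
            unfolding Pj_def Z_def
            using term_bound[of "y t" C1 R "KP lam mu k a b y t" C4 "wr t + 1" q "BP lam mu k a b p y t"
                p "d1 j" "d2 j" "d3 j" "d4 j" sstar "g t"] ybd[OF t] elim t BPe wr0[of t] R1 C1 C4 q1 p0
              dj' dd sfle[OF j]
            by (simp add: sf_def add_ac)
          hence "\<bar>c j\<bar> * Pj \<le> \<bar>c j\<bar> * (C1 powr d1 j * C4 powr (d2 j + d4 j) * R powr sstar * Z)"
            by (rule mult_left_mono) simp
          hence "\<bar>c j\<bar> * Pj \<le> Aj j * R powr sstar * Z"
            by (simp add: Aj_def mult_ac)
          moreover have "- (\<bar>c j\<bar> * Pj) \<le> c j * Pj"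
            using mult_right_mono[OF abs_ge_minus_self[of "c j"] Pj0] by simp
          ultimately show ?thesis by (simp add: Pj_def mult_ac)
        qed
        have "- (Atot * R powr sstar * Z) = (\<Sum>j=1..N. - (Aj j * R powr sstar * Z))"
          by (simp add: Atot_def sum_distrib_right sum_negf)
        also have "\<dots> \<le> (\<Sum>j=1..N. c j * pw (y t) (d1 j) * pw (KP lam mu k a b y t) (d2 j)
              * pw (g t) (d3 j) * pw (BP lam mu k a b p y t) (d4 j))"
          by (rule sum_mono) (rule tj)
        finally have "- (Atot * R powr sstar * Z) \<le> \<dots>" .
        moreover have "c0 * \<bar>g t\<bar> powr p + (\<Sum>j=1..N. c j * pw (y t) (d1 j) * pw (KP lam mu k a b y t) (d2 j)
              * pw (g t) (d3 j) * pw (BP lam mu k a b p y t) (d4 j))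
            \<le> F (y t) (KP lam mu k a b y t) (g t) (BP lam mu k a b p y t) t"
          using Fb t by blast
        ultimately show "c0 * \<bar>g t\<bar> powr p - Atot * R powr sstar * (wr t + 2 + \<bar>g t\<bar> powr p / R powr p)
          \<le> F (y t) (KP lam mu k a b y t) (g t) (BP lam mu k a b p y t) t"
          unfolding Zeq[symmetric] by linarith
      qed
    qed
    define H where "H = (\<lambda>t. indicator {a..b} t * (c0 * \<bar>g t\<bar> powr p))"
    define Sb where "Sb = (\<lambda>t. Atot * R powr sstar * (indicator {a..b} t * (wr t + 2)
        + indicator {a..b} t * \<bar>g t\<bar> powr p / R powr p))"
    have Hm: "H \<in> borel_measurable lborel"
    proof -
      have "H = (\<lambda>t. c0 * (indicator {a..b} t * \<bar>g t\<bar> powr p))" by (simp add: H_def fun_eq_iff mult_ac)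
      thus ?thesis using gm by simp
    qed
    have Sm: "Sb \<in> borel_measurable lborel" unfolding Sb_def using gm wrm by simp
    have H0: "0 \<le> H t" for t using c0 by (simp add: H_def)
    have S0: "0 \<le> Sb t" for t using Atot0 wr0[of t] by (simp add: Sb_def)
    have HI: "(\<integral>\<^sup>+t. ennreal (H t) \<partial>lborel) = ennreal (c0 * G)"
    proof -
      have "(\<integral>\<^sup>+t. ennreal (H t) \<partial>lborel) = (\<integral>\<^sup>+t. ennreal c0 * ennreal (indicator {a..b} t * \<bar>g t\<bar> powr p) \<partial>lborel)"
        using c0 by (intro nn_integral_cong) (simp add: H_def ennreal_mult'[symmetric] mult_ac)
      also have "\<dots> = ennreal c0 * ennreal G" using gm GI by (simp add: nn_integral_cmult)
      finally show ?thesis using c0 by (simp add: ennreal_mult'[symmetric])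
    qed
    have SI: "(\<integral>\<^sup>+t. ennreal (Sb t) \<partial>lborel) \<le> ennreal (Atot * R powr sstar * E)"
    proof -
      define K where "K = Atot * R powr sstar"
      have K0: "0 \<le> K" using Atot0 by (simp add: K_def)
      have "(\<integral>\<^sup>+t. ennreal (Sb t) \<partial>lborel) = (\<integral>\<^sup>+t. ennreal K * (ennreal (indicator {a..b} t * (wr t + 2))
          + ennreal (1 / R powr p) * ennreal (indicator {a..b} t * \<bar>g t\<bar> powr p)) \<partial>lborel)"
        using K0 wr0 by (intro nn_integral_cong)
          (simp add: Sb_def K_def ennreal_mult'[symmetric] ennreal_plus[symmetric] del: ennreal_plus)
      also have "\<dots> = ennreal K * ((\<integral>\<^sup>+t. ennreal (indicator {a..b} t * (wr t + 2)) \<partial>lborel)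
          + ennreal (1 / R powr p) * (\<integral>\<^sup>+t. ennreal (indicator {a..b} t * \<bar>g t\<bar> powr p) \<partial>lborel))"
        using wrm gm by (simp add: nn_integral_cmult nn_integral_add)
      also have "\<dots> \<le> ennreal K * (ennreal (Wtot + 2 * (b - a)) + ennreal (1 / R powr p) * ennreal (R powr p))"
        by (intro mult_left_mono add_mono wrI gI') auto
      also have "\<dots> = ennreal K * ennreal E"
      proof -
        have X0: "0 \<le> Wtot + 2 * (b - a)" using Wtot0 ab by simp
        have "ennreal (1 / R powr p) * ennreal (R powr p) = ennreal 1"
          using R1 by (simp add: ennreal_mult'[symmetric])
        moreover have "ennreal (Wtot + 2 * (b - a)) + ennreal 1 = ennreal E"
          unfolding E_def by (subst ennreal_plus[OF X0 zero_le_one]) simp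
        ultimately show ?thesis by simp
      qed
      also have "\<dots> = ennreal (K * E)" using K0 by (simp add: ennreal_mult'[symmetric])
      finally show ?thesis by (simp add: K_def)
    qed
    have "ereal (c0 * G - 2 * (Atot * R powr sstar * E)) \<le>
        ext_integral a b (\<lambda>t. F (y t) (KP lam mu k a b y t) (g t) (BP lam mu k a b p y t) t)"
    proof (rule ext_lower[OF Hm Sm H0 S0 HI SI])
      show "0 \<le> Atot * R powr sstar * E" using Atot0 E0 by simp
      show "H t = 0" if "t \<notin> {a..b}" for t using that by (simp add: H_def)
      show "AE t in lborel. t \<in> {a..b} \<longrightarrow> H t - Sb t
          \<le> F (y t) (KP lam mu k a b y t) (g t) (BP lam mu k a b p y t) t"
        using Fbd
      proof eventually_elim
        case (elim t)
        show ?case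
        proof
          assume t: "t \<in> {a..b}"
          have "H t - Sb t = c0 * \<bar>g t\<bar> powr p - Atot * R powr sstar * (wr t + 2 + \<bar>g t\<bar> powr p / R powr p)"
            using t by (simp add: H_def Sb_def add.assoc)
          thus "H t - Sb t \<le> F (y t) (KP lam mu k a b y t) (g t) (BP lam mu k a b p y t) t"
            using elim t by simp
        qed
      qed
    qed
    moreover have "c0 * G - 2 * (Atot * R powr sstar * E) = c0 * (R powr p - 1) - (2 * Atot * E) * R powr sstar"
      using Rp by (simp add: algebra_simps)
    ultimately have "ereal (c0 * (R powr p - 1) - (2 * Atot * E) * R powr sstar) \<le> Ifun F lam mu k a b p y"
      by (simp add: Ifun_def g_def)
    thus ?thesis using R1 nb by blast
  qed
  show ?thesis unfolding coercive_on_def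
  proof
    fix M :: real
    obtain R0 where R0: "1 \<le> R0" "\<And>R. R \<ge> R0 \<Longrightarrow> c0 * (R powr p - 1) - (2 * Atot * E) * R powr sstar > M"
      using growth[OF c0 sstar0 sstarp, of "2 * Atot * E" M] Atot0 E0 by auto
    show "\<exists>R. \<forall>y\<in>{y \<in> W1p p a b. y a = ya}. R < W1p_norm p a b y \<longrightarrow> ereal M < Ifun F lam mu k a b p y"
    proof (intro exI ballI impI)
      fix y assume y: "y \<in> {y \<in> W1p p a b. y a = ya}" and n: "C2 * R0 < W1p_norm p a b y"
      obtain R where R: "1 \<le> R" "W1p_norm p a b y \<le> C2 * R"
        "ereal (c0 * (R powr p - 1) - (2 * Atot * E) * R powr sstar) \<le> Ifun F lam mu k a b p y"
        using key[of y] y by auto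
      have "C2 * R0 < C2 * R" using n R(2) by linarith
      hence "R0 \<le> R" using C2 by simp
      hence "ereal M < ereal (c0 * (R powr p - 1) - (2 * Atot * E) * R powr sstar)" using R0 by simp
      thus "ereal M < Ifun F lam mu k a b p y" using R(3) by (rule less_le_trans)
    qed
  qed
qed

end
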